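(* Let $\ell_1,\dots,\ell_T$ be labels, $v_1,v_2>0$, and indices $i\le k<j$ such that the optimal solutions of the adjacent subproblems $(i,k)$ and $(k+1,j)$ both exist and are constant (hence with values $r_{i,k}$ and $r_{k+1,j}$ respectively). If $r_{i,k}\ge r_{k+1,j}$, then the optimal solution of the pooled subproblem $(i,j)$ exists, is constant, and has value $r_{i,j}$.
   Context: A regular binary proper scoring rule (RBPSR) is a function $C_\rho:\{\theta_1,\theta_2\}\times[0,1]\to[0,\infty]$ given by $C_\rho(\theta_1,q)=\int_q^1\frac{\rho(\eta)}{\eta}\,d\eta$ and $C_\rho(\theta_2,q)=\int_0^q\frac{\rho(\eta)}{1-\eta}\,d\eta$, where $\rho$ is a probability distribution on $[0,1]$ (possibly containing Dirac point masses), and these integrals are finite except that $C_\rho(\theta_1,0)$ and $C_\rho(\theta_2,1)$ may equal $\infty$. Given labels $\ell_1,\dots,\ell_T\in\{\theta_1,\theta_2\}$ and weights $v_1,v_2>0$, write $w(\theta_1)=v_1$, $w(\theta_2)=v_2$. For $1\le i\le j\le T$, a solution of subproblem $(i,j)$ is any $p_{i,j}=(p_i,\dots,p_j)\in[0,1]^{j-i+1}$, feasible if $p_i\le\cdots\le p_j$, with objective $J_{i,j}(p_{i,j})=\sum_{t=i}^j w(\ell_t)C_\rho(\ell_t,p_t)$. The optimal solution of subproblem $(i,j)$ is a feasible solution minimizing $J_{i,j}$ among feasible solutions simultaneously for every RBPSR $C_\rho$; it is constant if $p_i=\cdots=p_j$. For $i\le j$, $r_{i,j}=\frac{v_1m_{i,j}}{v_1m_{i,j}+v_2n_{i,j}}$,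 where $m_{i,j},n_{i,j}$ are the numbers of $\theta_1$- and $\theta_2$-labels among $\ell_i,\dots,\ell_j$. *)

theory Defs
  imports "HOL-Probability.Probability"
begin

datatype label = \<theta>\<^sub>1 | \<theta>\<^sub>2

definition einv :: "real \<Rightarrow> ennreal" where
  "einv x = (if x = 0 then \<infinity> else ennreal (1 / x))"

text \<open>Scoring rule C_rho. Convention for point masses:
  C(theta1,q) integrates over [q,1], C(theta2,q) over [0,q).\<close>
definition C :: "real measure \<Rightarrow> label \<Rightarrow> real \<Rightarrow> ennreal" where
  "C \<rho> l q = (case l of
      \<theta>\<^sub>1 \<Rightarrow> (\<integral>\<^sup>+ \<eta>. einv \<eta> * indicator {q..1} \<eta> \<partial>\<rho>)
    | \<theta>\<^sub>2 \<Rightarrow> (\<integral>\<^sup>+ \<eta>. einv (1 - \<eta>) * indicator {0..<q} \<eta> \<partial>\<rho>))"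

definition RBPSR :: "real measure \<Rightarrow> bool" where
  "RBPSR \<rho> \<longleftrightarrow> prob_space \<rho> \<and> sets \<rho> = sets borel \<and> emeasure \<rho> {0..1} = 1
     \<and> (\<forall>q\<in>{0<..1}. C \<rho> \<theta>\<^sub>1 q < \<infinity>)
     \<and> (\<forall>q\<in>{0..<1}. C \<rho> \<theta>\<^sub>2 q < \<infinity>)"

definition w :: "real \<Rightarrow> real \<Rightarrow> label \<Rightarrow> real" where
  "w v1 v2 l = (case l of \<theta>\<^sub>1 \<Rightarrow> v1 | \<theta>\<^sub>2 \<Rightarrow> v2)"

text \<open>A solution of subproblem (i,j) is p restricted to {i..j}.\<close>
definition feasible :: "nat \<Rightarrow> nat \<Rightarrow> (nat \<Rightarrow> real) \<Rightarrow> bool" where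
  "feasible i j p \<longleftrightarrow> (\<forall>t\<in>{i..j}. 0 \<le> p t \<and> p t \<le> 1)
     \<and> (\<forall>s\<in>{i..j}. \<forall>t\<in>{i..j}. s \<le> t \<longrightarrow> p s \<le> p t)"

definition J :: "real measure \<Rightarrow> (nat \<Rightarrow> label) \<Rightarrow> real \<Rightarrow> real \<Rightarrow> nat \<Rightarrow> nat
                   \<Rightarrow> (nat \<Rightarrow> real) \<Rightarrow> ennreal" where
  "J \<rho> lab v1 v2 i j p = (\<Sum>t=i..j. ennreal (w v1 v2 (lab t)) * C \<rho> (lab t) (p t))"

definition optimal :: "(nat \<Rightarrow> label) \<Rightarrow> real \<Rightarrow> real \<Rightarrow> nat \<Rightarrow> nat \<Rightarrow> (nat \<Rightarrow> real) \<Rightarrow> bool" where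
  "optimal lab v1 v2 i j p \<longleftrightarrow> feasible i j p \<and>
     (\<forall>\<rho>. RBPSR \<rho> \<longrightarrow> (\<forall>p'. feasible i j p' \<longrightarrow> J \<rho> lab v1 v2 i j p \<le> J \<rho> lab v1 v2 i j p'))"

definition const_sol :: "nat \<Rightarrow> nat \<Rightarrow> (nat \<Rightarrow> real) \<Rightarrow> bool" where
  "const_sol i j p \<longleftrightarrow> (\<forall>s\<in>{i..j}. \<forall>t\<in>{i..j}. p s = p t)"

definition cnt :: "(nat \<Rightarrow> label) \<Rightarrow> label \<Rightarrow> nat \<Rightarrow> nat \<Rightarrow> nat" where
  "cnt lab l i j = card {t\<in>{i..j}. lab t = l}"

definition r :: "(nat \<Rightarrow> label) \<Rightarrow> real \<Rightarrow> real \<Rightarrow> nat \<Rightarrow> nat \<Rightarrow> real" where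
  "r lab v1 v2 i j = v1 * real (cnt lab \<theta>\<^sub>1 i j) /
      (v1 * real (cnt lab \<theta>\<^sub>1 i j) + v2 * real (cnt lab \<theta>\<^sub>2 i j))"

end

theory Submission
  imports Defs
begin


definition cst :: "real \<Rightarrow> label \<Rightarrow> real \<Rightarrow> ennreal" where
  "cst \<eta> l q = (case l of \<theta>\<^sub>1 \<Rightarrow> einv \<eta> * indicator {q..1} \<eta>
      | \<theta>\<^sub>2 \<Rightarrow> einv (1 - \<eta>) * indicator {0..<q} \<eta>)"

definition L :: "real \<Rightarrow> (nat \<Rightarrow> label) \<Rightarrow> real \<Rightarrow> real \<Rightarrow> nat \<Rightarrow> nat \<Rightarrow> (nat \<Rightarrow> real) \<Rightarrow> ennreal" where
  "L \<eta> lab v1 v2 i j p = (\<Sum>t=i..j. ennreal (w v1 v2 (lab t)) * cst \<eta> (lab t) (p t))"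

lemma einv_meas[measurable]: "einv \<in> borel_measurable borel"
  unfolding einv_def by measurable

lemma cst_meas[measurable]: "(\<lambda>\<eta>. cst \<eta> l q) \<in> borel_measurable borel"
  unfolding cst_def by (cases l) auto

lemma C_eq: "C \<rho> l q = (\<integral>\<^sup>+\<eta>. cst \<eta> l q \<partial>\<rho>)"
  unfolding C_def cst_def by (cases l) auto

lemma J_eq:
  assumes "sets \<rho> = sets borel"
  shows "J \<rho> lab v1 v2 i j p = (\<integral>\<^sup>+\<eta>. L \<eta> lab v1 v2 i j p \<partial>\<rho>)"
proof -
  have m: "\<And>l q. (\<lambda>\<eta>. cst \<eta> l q) \<in> borel_measurable \<rho>"
    by (subst measurable_cong_sets[OF assms refl]) simp
  have m2: "\<And>l q c. (\<lambda>\<eta>. c * cst \<eta> l q) \<in> borel_measurable \<rho>"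
    by (subst measurable_cong_sets[OF assms refl]) measurable
  show ?thesis
    unfolding J_def L_def C_eq
    by (subst nn_integral_sum) (auto simp: nn_integral_cmult m m2)
qed

lemma C_return: "C (return borel \<eta>) l q = cst \<eta> l q"
  unfolding C_eq by (rule nn_integral_return) auto

lemma J_return: "J (return borel \<eta>) lab v1 v2 i j p = L \<eta> lab v1 v2 i j p"
  unfolding J_def L_def C_return ..

lemma RBPSR_return:
  assumes "0 \<le> \<eta>" "\<eta> < 1"
  shows "RBPSR (return borel \<eta>)"
proof -
  have 1: "prob_space (return borel \<eta>)" by (rule prob_space_return) simp
  have 2: "\<forall>q\<in>{0<..1::real}. cst \<eta> \<theta>\<^sub>1 q < \<top>"
    using assms by (auto simp: cst_def einv_def indicator_def)
  have 3: "\<forall>q\<in>{0..<1::real}. cst \<eta> \<theta>\<^sub>2 q < \<top>"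
    using assms by (auto simp: cst_def einv_def indicator_def)
  show ?thesis unfolding RBPSR_def C_return using 1 2 3 assms by simp
qed



lemma cnt_pos: "x \<le> y \<Longrightarrow> cnt lab \<theta>\<^sub>1 x y + cnt lab \<theta>\<^sub>2 x y > 0"
proof -
  assume "x \<le> y"
  show ?thesis
  proof (cases "lab x")
    case \<theta>\<^sub>1
    then have "x \<in> {t\<in>{x..y}. lab t = \<theta>\<^sub>1}" using \<open>x \<le> y\<close> by auto
    then have "cnt lab \<theta>\<^sub>1 x y > 0" unfolding cnt_def card_gt_0_iff by auto
    then show ?thesis by simp
  next
    case \<theta>\<^sub>2
    then have "x \<in> {t\<in>{x..y}. lab t = \<theta>\<^sub>2}" using \<open>x \<le> y\<close> by auto
    then have "cnt lab \<theta>\<^sub>2 x y > 0" unfolding cnt_def card_gt_0_iff by auto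
    then show ?thesis by simp
  qed
qed

lemma cnt_split: "i \<le> k \<Longrightarrow> k < j \<Longrightarrow> cnt lab l i j = cnt lab l i k + cnt lab l (k+1) j"
proof -
  assume a: "i \<le> k" "k < j"
  have "{t\<in>{i..j}. lab t = l} = {t\<in>{i..k}. lab t = l} \<union> {t\<in>{k+1..j}. lab t = l}"
    using a by auto
  moreover have "card ({t\<in>{i..k}. lab t = l} \<union> {t\<in>{k+1..j}. lab t = l}) =
     card {t\<in>{i..k}. lab t = l} + card {t\<in>{k+1..j}. lab t = l}"
    by (rule card_Un_disjoint) auto
  ultimately show ?thesis unfolding cnt_def by simp
qed

lemma mediant:
  fixes x1 x2 d1 d2 :: real
  assumes "d1 > 0" "d2 > 0" "x1 / d1 \<ge> x2 / d2"
  shows "x2 / d2 \<le> (x1 + x2) / (d1 + d2) \<and> (x1 + x2) / (d1 + d2) \<le> x1 / d1"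
proof -
  have c: "x2 * d1 \<le> x1 * d2" using assms by (simp add: divide_simps mult.commute)
  have 1: "x2 / d2 \<le> (x1 + x2) / (d1 + d2)" using assms c by (simp add: divide_simps algebra_simps)
  have 2: "(x1 + x2) / (d1 + d2) \<le> x1 / d1" using assms c by (simp add: divide_simps algebra_simps)
  show ?thesis using 1 2 by simp
qed
lemma X: fixes m n v1 v2 \<eta> :: real assumes "\<eta> > 0" "\<eta> < 1" "v1 * m + v2 * n > 0"
 shows "(m * v1 / \<eta> \<le> n * v2 / (1 - \<eta>)) \<longleftrightarrow> v1 * m / (v1 * m + v2 * n) \<le> \<eta>"
proof -
  have "(m * v1 / \<eta> \<le> n * v2 / (1 - \<eta>)) \<longleftrightarrow> m * v1 * (1 - \<eta>) \<le> n * v2 * \<eta>"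
    using assms by (simp add: divide_simps)
  also have "\<dots> \<longleftrightarrow> v1 * m \<le> \<eta> * (v1 * m + v2 * n)" by (simp add: algebra_simps)
  also have "\<dots> \<longleftrightarrow> v1 * m / (v1 * m + v2 * n) \<le> \<eta>" using assms by (simp add: divide_simps)
  finally show ?thesis .
qed

lemma r_iff:
  assumes "x \<le> y" "v1 > 0" "v2 > 0" "0 \<le> \<eta>" "\<eta> < 1"
  shows "r lab v1 v2 x y \<le> \<eta> \<longleftrightarrow>
    of_nat (cnt lab \<theta>\<^sub>1 x y) * (ennreal v1 * einv \<eta>) \<le> of_nat (cnt lab \<theta>\<^sub>2 x y) * (ennreal v2 * einv (1 - \<eta>))"
proof -
  define m where "m = cnt lab \<theta>\<^sub>1 x y"
  define n where "n = cnt lab \<theta>\<^sub>2 x y"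
  have mn: "m + n > 0" using cnt_pos[OF assms(1)] unfolding m_def n_def .
  have rr: "r lab v1 v2 x y = v1 * real m / (v1 * real m + v2 * real n)"
    unfolding r_def m_def n_def ..
  have D: "v1 * real m + v2 * real n > 0"
  proof (cases "m = 0")
    case True
    then have "n > 0" using mn by simp
    then show ?thesis using True assms by simp
  next
    case False
    then have "v1 * real m > 0" using assms by simp
    moreover have "v2 * real n \<ge> 0" using assms by simp
    ultimately show ?thesis by linarith
  qed
  have e1: "einv (1 - \<eta>) = ennreal (1 / (1 - \<eta>))" using assms by (simp add: einv_def)
  show ?thesis
  proof (cases "\<eta> = 0")
    case True
    show ?thesis
    proof (cases "m = 0")
      case True
      then have "r lab v1 v2 x y = 0" using rr by simp
      moreover have "of_nat m * (ennreal v1 * einv \<eta>) = 0" using True by simp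
      ultimately show ?thesis using \<open>\<eta> = 0\<close> unfolding m_def[symmetric] n_def[symmetric]
        by (metis order_refl zero_le)
    next
      case False
      have "r lab v1 v2 x y > 0" using rr False D assms by simp
      moreover have "of_nat m * (ennreal v1 * einv \<eta>) = \<top>"
        using False \<open>\<eta> = 0\<close> assms by (simp add: einv_def ennreal_mult_top ennreal_top_mult)
      moreover have "of_nat n * (ennreal v2 * einv (1 - \<eta>)) < \<top>"
        using e1 by (simp add: ennreal_of_nat_eq_real_of_nat ennreal_mult_less_top)
      ultimately show ?thesis using \<open>\<eta> = 0\<close> unfolding m_def[symmetric] n_def[symmetric]
        by (metis not_le top_unique)
    qed
  next
    case False
    then have pos: "\<eta> > 0" using assms by simp
    have e0: "einv \<eta> = ennreal (1 / \<eta>)" using False by (simp add: einv_def)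
    have "of_nat m * (ennreal v1 * einv \<eta>) = ennreal (real m * v1 / \<eta>)"
      using e0 assms pos by (simp add: ennreal_of_nat_eq_real_of_nat ennreal_mult[symmetric])
    moreover have "of_nat n * (ennreal v2 * einv (1 - \<eta>)) = ennreal (real n * v2 / (1 - \<eta>))"
      using e1 assms by (simp add: ennreal_of_nat_eq_real_of_nat ennreal_mult[symmetric])
    moreover have "(real m * v1 / \<eta> \<le> real n * v2 / (1 - \<eta>)) \<longleftrightarrow> r lab v1 v2 x y \<le> \<eta>"
      unfolding rr using X[OF pos assms(5) D] by simp
    moreover have "0 \<le> real n * v2 / (1 - \<eta>)" using assms by simp
    ultimately show ?thesis unfolding m_def[symmetric] n_def[symmetric]
      using ennreal_le_iff by metis
  qed
qed



lemma term_eq: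
  assumes "0 \<le> \<eta>" "\<eta> < 1"
  shows "ennreal (w v1 v2 l) * cst \<eta> l q = (if l = \<theta>\<^sub>1 then (if q \<le> \<eta> then ennreal v1 * einv \<eta> else 0)
     else (if q \<le> \<eta> then 0 else ennreal v2 * einv (1 - \<eta>)))"
  using assms by (cases l) (auto simp: w_def cst_def indicator_def)

lemma L_le:
  assumes "0 \<le> \<eta>" "\<eta> < 1" "\<forall>t\<in>{x..y}. q t \<le> \<eta>"
  shows "L \<eta> lab v1 v2 x y q = of_nat (cnt lab \<theta>\<^sub>1 x y) * (ennreal v1 * einv \<eta>)"
proof -
  have "L \<eta> lab v1 v2 x y q = (\<Sum>t\<in>{x..y}. if lab t = \<theta>\<^sub>1 then ennreal v1 * einv \<eta> else 0)"
    unfolding L_def using assms by (intro sum.cong) (auto simp: term_eq)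
  also have "\<dots> = (\<Sum>t\<in>{t\<in>{x..y}. lab t = \<theta>\<^sub>1}. ennreal v1 * einv \<eta>)"
    by (rule sum.inter_filter[symmetric]) simp
  also have "\<dots> = of_nat (cnt lab \<theta>\<^sub>1 x y) * (ennreal v1 * einv \<eta>)"
    unfolding cnt_def by simp
  finally show ?thesis .
qed

lemma L_gt:
  assumes "0 \<le> \<eta>" "\<eta> < 1" "\<forall>t\<in>{x..y}. q t > \<eta>"
  shows "L \<eta> lab v1 v2 x y q = of_nat (cnt lab \<theta>\<^sub>2 x y) * (ennreal v2 * einv (1 - \<eta>))"
proof -
  have "L \<eta> lab v1 v2 x y q = (\<Sum>t\<in>{x..y}. if lab t = \<theta>\<^sub>2 then ennreal v2 * einv (1 - \<eta>) else 0)"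
    unfolding L_def using assms
    by (intro sum.cong) (auto simp: term_eq not_le[symmetric] intro: label.exhaust)
  also have "\<dots> = (\<Sum>t\<in>{t\<in>{x..y}. lab t = \<theta>\<^sub>2}. ennreal v2 * einv (1 - \<eta>))"
    by (rule sum.inter_filter[symmetric]) simp
  also have "\<dots> = of_nat (cnt lab \<theta>\<^sub>2 x y) * (ennreal v2 * einv (1 - \<eta>))"
    unfolding cnt_def by simp
  finally show ?thesis .
qed

lemma cst_other:
  assumes "\<not> (0 \<le> \<eta> \<and> \<eta> < 1)" "0 \<le> q" "q \<le> 1" "0 \<le> q'" "q' \<le> 1"
  shows "cst \<eta> l q = cst \<eta> l q'"
  using assms by (cases l) (auto simp: cst_def indicator_def)

lemma L_other:
  assumes "\<not> (0 \<le> \<eta> \<and> \<eta> < 1)" "feasible x y q" "feasible x y q'"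
  shows "L \<eta> lab v1 v2 x y q = L \<eta> lab v1 v2 x y q'"
proof -
  have "\<And>t. t \<in> {x..y} \<Longrightarrow> cst \<eta> (lab t) (q t) = cst \<eta> (lab t) (q' t)"
    using assms(2,3) unfolding feasible_def by (intro cst_other[OF assms(1)]) auto
  then show ?thesis unfolding L_def by (intro sum.cong) auto
qed

lemma L_split: "i \<le> k \<Longrightarrow> k < j \<Longrightarrow> L \<eta> lab v1 v2 i j q = L \<eta> lab v1 v2 i k q + L \<eta> lab v1 v2 (k+1) j q"
proof -
  assume a: "i \<le> k" "k < j"
  have "{i..j} = {i..k} \<union> {k+1..j}" using a by auto
  then show ?thesis unfolding L_def by (simp add: sum.union_disjoint)
qed

lemma feasible_sub: "feasible i j p \<Longrightarrow> i \<le> x \<Longrightarrow> y \<le> j \<Longrightarrow> feasible x y p"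
  unfolding feasible_def by auto



lemma den_pos: "x \<le> y \<Longrightarrow> v1 > 0 \<Longrightarrow> v2 > 0 \<Longrightarrow>
   v1 * real (cnt lab \<theta>\<^sub>1 x y) + v2 * real (cnt lab \<theta>\<^sub>2 x y) > 0"
proof -
  assume a: "x \<le> y" "v1 > 0" "v2 > 0"
  define m where "m = cnt lab \<theta>\<^sub>1 x y"
  define n where "n = cnt lab \<theta>\<^sub>2 x y"
  have mn: "m + n > 0" using cnt_pos[OF a(1)] unfolding m_def n_def .
  have "v1 * real m + v2 * real n > 0"
  proof (cases "m = 0")
    case True
    then have "n > 0" using mn by simp
    then show ?thesis using True a by simp
  next
    case False
    then have "v1 * real m > 0" using a by simp
    moreover have "v2 * real n \<ge> 0" using a by simp
    ultimately show ?thesis by linarith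
  qed
  then show ?thesis unfolding m_def n_def .
qed

lemma r_between:
  assumes "v1 > 0" "v2 > 0" "i \<le> k" "k < j" "r lab v1 v2 i k \<ge> r lab v1 v2 (k+1) j"
  shows "r lab v1 v2 (k+1) j \<le> r lab v1 v2 i j \<and> r lab v1 v2 i j \<le> r lab v1 v2 i k"
proof -
  define m1 where "m1 = real (cnt lab \<theta>\<^sub>1 i k)"
  define n1 where "n1 = real (cnt lab \<theta>\<^sub>2 i k)"
  define m2 where "m2 = real (cnt lab \<theta>\<^sub>1 (k+1) j)"
  define n2 where "n2 = real (cnt lab \<theta>\<^sub>2 (k+1) j)"
  have d1: "v1 * m1 + v2 * n1 > 0" unfolding m1_def n1_def using assms by (intro den_pos) auto
  have d2: "v1 * m2 + v2 * n2 > 0" unfolding m2_def n2_def using assms by (intro den_pos) auto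
  have r1: "r lab v1 v2 i k = v1 * m1 / (v1 * m1 + v2 * n1)" unfolding r_def m1_def n1_def ..
  have r2: "r lab v1 v2 (k+1) j = v1 * m2 / (v1 * m2 + v2 * n2)" unfolding r_def m2_def n2_def ..
  have r: "r lab v1 v2 i j = (v1 * m1 + v1 * m2) / ((v1 * m1 + v2 * n1) + (v1 * m2 + v2 * n2))"
  proof -
    have r0: "r lab v1 v2 i j = v1 * (m1 + m2) / (v1 * (m1 + m2) + v2 * (n1 + n2))"
      unfolding r_def m1_def n1_def m2_def n2_def cnt_split[OF assms(3,4)] of_nat_add by (rule refl)
    have "v1 * (m1 + m2) / (v1 * (m1 + m2) + v2 * (n1 + n2)) = (v1 * m1 + v1 * m2) / ((v1 * m1 + v2 * n1) + (v1 * m2 + v2 * n2))"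
      by (simp add: ring_distribs ac_simps)
    then show ?thesis using r0 by simp
  qed
  have "v1 * m1 / (v1 * m1 + v2 * n1) \<ge> v1 * m2 / (v1 * m2 + v2 * n2)" using assms(5) unfolding r1 r2 .
  from mediant[OF d1 d2 this] show ?thesis unfolding r r1 r2 .
qed

lemma pointwise:
  assumes v: "v1 > 0" "v2 > 0" and ikj: "i \<le> k" "k < j"
    and eta: "0 \<le> \<eta>" "\<eta> < 1"
    and o1: "\<forall>p'. feasible i k p' \<longrightarrow> L \<eta> lab v1 v2 i k p1 \<le> L \<eta> lab v1 v2 i k p'"
    and c1: "const_sol i k p1"
    and o2: "\<forall>p'. feasible (k+1) j p' \<longrightarrow> L \<eta> lab v1 v2 (k+1) j p2 \<le> L \<eta> lab v1 v2 (k+1) j p'"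
    and c2: "const_sol (k+1) j p2"
    and rle: "r lab v1 v2 i k \<ge> r lab v1 v2 (k+1) j"
    and fp: "feasible i j p"
  shows "L \<eta> lab v1 v2 i j (\<lambda>_. r lab v1 v2 i j) \<le> L \<eta> lab v1 v2 i j p"
proof -
  define a where "a = ennreal v1 * einv \<eta>"
  define b where "b = ennreal v2 * einv (1 - \<eta>)"
  define A1 where "A1 = of_nat (cnt lab \<theta>\<^sub>1 i k) * a"
  define B1 where "B1 = of_nat (cnt lab \<theta>\<^sub>2 i k) * b"
  define A2 where "A2 = of_nat (cnt lab \<theta>\<^sub>1 (k+1) j) * a"
  define B2 where "B2 = of_nat (cnt lab \<theta>\<^sub>2 (k+1) j) * b"
  define L1 where "L1 = L \<eta> lab v1 v2 i k p"
  define L2 where "L2 = L \<eta> lab v1 v2 (k+1) j p"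
  have Lsplit: "L \<eta> lab v1 v2 i j p = L1 + L2" unfolding L1_def L2_def by (rule L_split[OF ikj])
  have iff1: "r lab v1 v2 i k \<le> \<eta> \<longleftrightarrow> A1 \<le> B1"
    unfolding A1_def B1_def a_def b_def by (rule r_iff[OF ikj(1) v eta])
  have iff2: "r lab v1 v2 (k+1) j \<le> \<eta> \<longleftrightarrow> A2 \<le> B2"
    unfolding A2_def B2_def a_def b_def by (rule r_iff[OF _ v eta]) (use ikj in simp)
  have iff: "r lab v1 v2 i j \<le> \<eta> \<longleftrightarrow> A1 + A2 \<le> B1 + B2"
  proof -
    have e1: "A1 + A2 = of_nat (cnt lab \<theta>\<^sub>1 i j) * a"
      unfolding A1_def A2_def cnt_split[OF ikj] by (simp add: distrib_right)
    have e2: "B1 + B2 = of_nat (cnt lab \<theta>\<^sub>2 i j) * b"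
      unfolding B1_def B2_def cnt_split[OF ikj] by (simp add: distrib_right)
    show ?thesis unfolding e1 e2 a_def b_def by (rule r_iff[OF _ v eta]) (use ikj in simp)
  qed
  have rbb: "r lab v1 v2 (k+1) j \<le> r lab v1 v2 i j \<and> r lab v1 v2 i j \<le> r lab v1 v2 i k"
    by (rule r_between[OF v ikj rle])
  note rb = conjunct1[OF rbb] conjunct2[OF rbb]
  have min1: "min A1 B1 \<le> L1"
  proof -
    have "L \<eta> lab v1 v2 i k p1 = A1 \<or> L \<eta> lab v1 v2 i k p1 = B1"
    proof (cases "p1 i \<le> \<eta>")
      case True
      have "\<forall>t\<in>{i..k}. p1 t \<le> \<eta>"
      proof
        fix t assume "t \<in> {i..k}"
        moreover have "i \<in> {i..k}" using ikj by simp
        ultimately have "p1 t = p1 i" using c1 unfolding const_sol_def by blast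
        then show "p1 t \<le> \<eta>" using True by simp
      qed
      then have "L \<eta> lab v1 v2 i k p1 = A1" unfolding A1_def a_def by (rule L_le[OF eta])
      then show ?thesis ..
    next
      case False
      have "\<forall>t\<in>{i..k}. p1 t > \<eta>"
      proof
        fix t assume "t \<in> {i..k}"
        moreover have "i \<in> {i..k}" using ikj by simp
        ultimately have "p1 t = p1 i" using c1 unfolding const_sol_def by blast
        then show "p1 t > \<eta>" using False by simp
      qed
      then have "L \<eta> lab v1 v2 i k p1 = B1" unfolding B1_def b_def by (rule L_gt[OF eta])
      then show ?thesis ..
    qed
    then have m: "min A1 B1 \<le> L \<eta> lab v1 v2 i k p1" by (auto simp: min_def)
    have fs: "feasible i k p" by (rule feasible_sub[OF fp]) (use ikj in auto)
    have "L \<eta> lab v1 v2 i k p1 \<le> L1"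
      unfolding L1_def using o1 fs by blast
    with m show ?thesis by (rule order_trans)
  qed
  have min2: "min A2 B2 \<le> L2"
  proof -
    have "L \<eta> lab v1 v2 (k+1) j p2 = A2 \<or> L \<eta> lab v1 v2 (k+1) j p2 = B2"
    proof (cases "p2 (k+1) \<le> \<eta>")
      case True
      have "\<forall>t\<in>{(k+1)..j}. p2 t \<le> \<eta>"
      proof
        fix t assume "t \<in> {(k+1)..j}"
        moreover have "(k+1) \<in> {(k+1)..j}" using ikj by simp
        ultimately have "p2 t = p2 (k+1)" using c2 unfolding const_sol_def by blast
        then show "p2 t \<le> \<eta>" using True by simp
      qed
      then have "L \<eta> lab v1 v2 (k+1) j p2 = A2" unfolding A2_def a_def by (rule L_le[OF eta])
      then show ?thesis ..
    next
      case False
      have "\<forall>t\<in>{(k+1)..j}. p2 t > \<eta>"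
      proof
        fix t assume "t \<in> {(k+1)..j}"
        moreover have "(k+1) \<in> {(k+1)..j}" using ikj by simp
        ultimately have "p2 t = p2 (k+1)" using c2 unfolding const_sol_def by blast
        then show "p2 t > \<eta>" using False by simp
      qed
      then have "L \<eta> lab v1 v2 (k+1) j p2 = B2" unfolding B2_def b_def by (rule L_gt[OF eta])
      then show ?thesis ..
    qed
    then have m: "min A2 B2 \<le> L \<eta> lab v1 v2 (k+1) j p2" by (auto simp: min_def)
    have fs: "feasible (k+1) j p" by (rule feasible_sub[OF fp]) (use ikj in auto)
    have "L \<eta> lab v1 v2 (k+1) j p2 \<le> L2"
      unfolding L2_def using o2 fs by blast
    with m show ?thesis by (rule order_trans)
  qed
  have mono: "\<And>s t. s \<in> {i..j} \<Longrightarrow> t \<in> {i..j} \<Longrightarrow> s \<le> t \<Longrightarrow> p s \<le> p t"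
    using fp unfolding feasible_def by blast
  show ?thesis
  proof (cases "r lab v1 v2 i j \<le> \<eta>")
    case True
    have cst: "L \<eta> lab v1 v2 i j (\<lambda>_. r lab v1 v2 i j) = A1 + A2"
      using L_split[OF ikj] L_le[OF eta, of i k] L_le[OF eta, of "k+1" j] True
      unfolding A1_def A2_def a_def by simp
    have A2B2: "A2 \<le> B2" using iff2 rb True by simp
    have L2A: "A2 \<le> L2" using min2 A2B2 by (simp add: min_def)
    show ?thesis
    proof (cases "p (k+1) \<le> \<eta>")
      case True
      have "\<forall>t\<in>{i..k}. p t \<le> \<eta>"
      proof
        fix t assume tt: "t \<in> {i..k}"
        have "p t \<le> p (k+1)" using tt ikj by (intro mono) auto
        then show "p t \<le> \<eta>" using True by simp
      qed
      then have "L1 = A1" unfolding L1_def A1_def a_def by (rule L_le[OF eta])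
      then show ?thesis unfolding cst Lsplit using L2A by (simp add: add_mono)
    next
      case False
      have "\<forall>t\<in>{k+1..j}. p t > \<eta>"
      proof
        fix t assume tt: "t \<in> {k+1..j}"
        have "p (k+1) \<le> p t" using tt ikj by (intro mono) auto
        then show "p t > \<eta>" using False by simp
      qed
      then have L2B: "L2 = B2" unfolding L2_def B2_def b_def by (rule L_gt[OF eta])
      show ?thesis
      proof (cases "A1 \<le> B1")
        case True
        then have "A1 \<le> L1" using min1 by (simp add: min_def)
        then show ?thesis unfolding cst Lsplit L2B using A2B2 by (simp add: add_mono)
      next
        case False
        then have "B1 \<le> L1" using min1 by (simp add: min_def)
        moreover have "A1 + A2 \<le> B1 + B2" using iff \<open>r lab v1 v2 i j \<le> \<eta>\<close> by simp
        ultimately show ?thesis unfolding cst Lsplit L2B by (meson add_right_mono order_trans)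
      qed
    qed
  next
    case False
    have cst: "L \<eta> lab v1 v2 i j (\<lambda>_. r lab v1 v2 i j) = B1 + B2"
      using L_split[OF ikj] L_gt[OF eta, of i k] L_gt[OF eta, of "k+1" j] False
      unfolding B1_def B2_def b_def by simp
    have B1A1: "\<not> A1 \<le> B1" using iff1 rb False by simp
    then have L1B: "B1 \<le> L1" using min1 by (simp add: min_def)
    show ?thesis
    proof (cases "p k \<le> \<eta>")
      case True
      have "\<forall>t\<in>{i..k}. p t \<le> \<eta>"
      proof
        fix t assume tt: "t \<in> {i..k}"
        have "p t \<le> p (k)" using tt ikj by (intro mono) auto
        then show "p t \<le> \<eta>" using True by simp
      qed
      then have L1A: "L1 = A1" unfolding L1_def A1_def a_def by (rule L_le[OF eta])
      show ?thesis
      proof (cases "B2 \<le> A2")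
        case True
        then have "min A2 B2 = B2" by (simp add: min.absorb2)
        then have "B2 \<le> L2" using min2 by simp
        moreover have "B1 \<le> A1" using B1A1 by simp
        ultimately show ?thesis unfolding cst Lsplit L1A by (simp add: add_mono)
      next
        case False
        have "A2 \<le> B2" using False by (meson linear)
        then have "min A2 B2 = A2" by (rule min.absorb1)
        then have "A2 \<le> L2" using min2 by simp
        moreover have "B1 + B2 \<le> A1 + A2" using iff \<open>\<not> r lab v1 v2 i j \<le> \<eta>\<close> by simp
        ultimately show ?thesis unfolding cst Lsplit L1A by (meson add_left_mono order_trans)
      qed
    next
      case False
      have "\<forall>t\<in>{k+1..j}. p t > \<eta>"
      proof
        fix t assume tt: "t \<in> {k+1..j}"
        have "p (k) \<le> p t" using tt ikj by (intro mono) auto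
        then show "p t > \<eta>" using False by simp
      qed
      then have "L2 = B2" unfolding L2_def B2_def b_def by (rule L_gt[OF eta])
      then show ?thesis unfolding cst Lsplit using L1B by (simp add: add_mono)
    qed
  qed
qed



lemma opt_pointwise:
  assumes "optimal lab v1 v2 x y p1" "0 \<le> \<eta>" "\<eta> < 1"
  shows "\<forall>p'. feasible x y p' \<longrightarrow> L \<eta> lab v1 v2 x y p1 \<le> L \<eta> lab v1 v2 x y p'"
proof (intro allI impI)
  fix p' assume f: "feasible x y p'"
  have "RBPSR (return borel \<eta>)" using assms(2,3) by (rule RBPSR_return)
  then have "J (return borel \<eta>) lab v1 v2 x y p1 \<le> J (return borel \<eta>) lab v1 v2 x y p'"
    using assms(1) f unfolding optimal_def by blast
  then show "L \<eta> lab v1 v2 x y p1 \<le> L \<eta> lab v1 v2 x y p'" unfolding J_return .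
qed

theorem theorem4p10:
  fixes lab :: "nat \<Rightarrow> label" and T i k j :: nat and v1 v2 :: real
  assumes "v1 > 0" and "v2 > 0"
    and "1 \<le> i" and "i \<le> k" and "k < j" and "j \<le> T"
    and "\<exists>p. optimal lab v1 v2 i k p \<and> const_sol i k p"
    and "\<exists>p. optimal lab v1 v2 (k+1) j p \<and> const_sol (k+1) j p"
    and "r lab v1 v2 i k \<ge> r lab v1 v2 (k+1) j"
  shows "optimal lab v1 v2 i j (\<lambda>_. r lab v1 v2 i j)"
proof -
  note v = assms(1,2) and ikj = assms(4,5)
  obtain p1 where p1: "optimal lab v1 v2 i k p1" "const_sol i k p1" using assms(7) by blast
  obtain p2 where p2: "optimal lab v1 v2 (k+1) j p2" "const_sol (k+1) j p2" using assms(8) by blast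
  have fc: "feasible i j (\<lambda>_. r lab v1 v2 i j)"
  proof -
    define m where "m = real (cnt lab \<theta>\<^sub>1 i j)"
    define n where "n = real (cnt lab \<theta>\<^sub>2 i j)"
    have d: "v1 * m + v2 * n > 0" unfolding m_def n_def using v ikj by (intro den_pos) auto
    have rr: "r lab v1 v2 i j = v1 * m / (v1 * m + v2 * n)" unfolding r_def m_def n_def ..
    have "0 \<le> v1 * m" "0 \<le> v2 * n" unfolding m_def n_def using v by auto
    then have "0 \<le> r lab v1 v2 i j" "r lab v1 v2 i j \<le> 1" unfolding rr using d by auto
    then show ?thesis unfolding feasible_def by auto
  qed
  show ?thesis
    unfolding optimal_def
  proof (intro conjI allI impI)
    show "feasible i j (\<lambda>_. r lab v1 v2 i j)" by (rule fc)
    fix \<rho> p' assume R: "RBPSR \<rho>" and fp: "feasible i j p'"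
    have s: "sets \<rho> = sets borel" using R unfolding RBPSR_def by blast
    have pw: "L \<eta> lab v1 v2 i j (\<lambda>_. r lab v1 v2 i j) \<le> L \<eta> lab v1 v2 i j p'" for \<eta>
    proof (cases "0 \<le> \<eta> \<and> \<eta> < 1")
      case True
      then have e: "0 \<le> \<eta>" "\<eta> < 1" by auto
      show ?thesis
        by (rule pointwise[OF v ikj e opt_pointwise[OF p1(1) e] p1(2)
              opt_pointwise[OF p2(1) e] p2(2) assms(9) fp])
    next
      case False
      show ?thesis using L_other[OF False fc fp] by simp
    qed
    show "J \<rho> lab v1 v2 i j (\<lambda>_. r lab v1 v2 i j) \<le> J \<rho> lab v1 v2 i j p'"
      unfolding J_eq[OF s] by (rule nn_integral_mono) (rule pw)
  qed
qed


end
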